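(* For any $E_1,E_2\in\mathfrak g$ there exist polynomials $\tilde\alpha_k(x_1,x_2)\in\mathbb C[x_1,x_2]$, $k=0,\dots,(\dim\mathfrak g)^2$, not all zero, such that $$\sum_{k=0}^{(\dim\mathfrak g)^2}\tilde\alpha_k(x_1,x_2)\frac{\partial^k}{\partial x_1^k}W_2(x_1.E_1,x_2.E_2)=0$$ for all $x_1\neq x_2$ in $U$.
   Context: Let $G\subset GL(r,\mathbb C)$ be a complex reductive Lie group given in a faithful matrix representation, with Lie algebra $\mathfrak g\subset\mathfrak{gl}(r,\mathbb C)$; ${\rm Tr}$ denotes the matrix trace. Let $\mathcal D(x)$ be an $r\times r$ matrix with rational entries in $x$, $\mathcal D(x)\in\mathfrak g$. Let $\Psi(x)$ be a holomorphic $G$-valued solution of $\frac{d}{dx}\Psi=\mathcal D\Psi$ on a simply connected domain $U\subset\mathbb C$ avoiding the poles of $\mathcal D$. For $x\in U$, $E\in\mathfrak g$, write $x.E$ for the pair and $M(x.E)=\Psi(x)E\Psi(x)^{-1}$. For $X_i=x_i.E_i$ with $x_1\ne x_2$ define $W_2(X_1,X_2)=\frac{1}{(x_1-x_2)^2}{\rm Tr}\,M(X_1)M(X_2)$. *)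

theory Defs
  imports "HOL-Analysis.Analysis" "HOL-Computational_Algebra.Polynomial"
begin

type_synonym 'n cmat = "complex^'n^'n"

definition cscale :: "complex \<Rightarrow> 'n::finite cmat \<Rightarrow> 'n cmat" where
  "cscale c A = (\<chi> i j. c * A $ i $ j)"

lemma cscale_vector_space: "Vector_Spaces.vector_space (cscale :: complex \<Rightarrow> 'n::finite cmat \<Rightarrow> 'n cmat)"
  by unfold_locales (simp_all add: cscale_def vec_eq_iff algebra_simps)

definition cdim :: "'n::finite cmat set \<Rightarrow> nat" where
  "cdim S = vector_space.dim cscale S"

definition csubspace :: "'n::finite cmat set \<Rightarrow> bool" where
  "csubspace S \<longleftrightarrow> 0 \<in> S \<and> (\<forall>A\<in>S. \<forall>B\<in>S. A + B \<in> S) \<and> (\<forall>c. \<forall>A\<in>S. cscale c A \<in> S)"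

definition commutator :: "'n::finite cmat \<Rightarrow> 'n cmat \<Rightarrow> 'n cmat" where
  "commutator A B = A ** B - B ** A"

definition matrix_lie_algebra :: "'n::finite cmat set \<Rightarrow> 'n cmat set" where
  "matrix_lie_algebra G = {A. \<exists>\<gamma> :: real \<Rightarrow> 'n cmat. \<gamma> 0 = mat 1 \<and> (\<forall>t. \<gamma> t \<in> G)
       \<and> (\<gamma> has_vector_derivative A) (at 0)}"

text \<open>A closed subgroup of GL(r,C) which is a complex Lie group
  (its Lie algebra is a complex subspace).\<close>
definition complex_matrix_lie_group :: "'n::finite cmat set \<Rightarrow> bool" where
  "complex_matrix_lie_group G \<longleftrightarrow>
     G \<subseteq> {A. invertible A} \<and> mat 1 \<in> G \<and>
     (\<forall>A\<in>G. \<forall>B\<in>G. A ** B \<in> G) \<and> (\<forall>A\<in>G. matrix_inv A \<in> G) \<and>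
     closedin (top_of_set {A. invertible A}) G \<and>
     csubspace (matrix_lie_algebra G)"

definition lie_ideal :: "'n::finite cmat set \<Rightarrow> 'n cmat set \<Rightarrow> bool" where
  "lie_ideal g I \<longleftrightarrow> csubspace I \<and> I \<subseteq> g \<and> (\<forall>A\<in>g. \<forall>B\<in>I. commutator A B \<in> I)"

text \<open>Reductive Lie algebra: the adjoint representation is completely reducible,
  i.e. every ideal has a complementary ideal.\<close>
definition reductive_lie_algebra :: "'n::finite cmat set \<Rightarrow> bool" where
  "reductive_lie_algebra g \<longleftrightarrow> csubspace g \<and> (\<forall>A\<in>g. \<forall>B\<in>g. commutator A B \<in> g) \<and>
     (\<forall>I. lie_ideal g I \<longrightarrow> (\<exists>J. lie_ideal g J \<and> I \<inter> J = {0} \<and> {A + B | A B. A \<in> I \<and> B \<in> J} = g))"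

definition reductive_complex_matrix_group :: "'n::finite cmat set \<Rightarrow> bool" where
  "reductive_complex_matrix_group G \<longleftrightarrow>
     complex_matrix_lie_group G \<and> reductive_lie_algebra (matrix_lie_algebra G)"

definition rational_matrix_fun ::
  "(complex \<Rightarrow> 'n::finite cmat) \<Rightarrow> ('n \<Rightarrow> 'n \<Rightarrow> complex poly) \<Rightarrow> ('n \<Rightarrow> 'n \<Rightarrow> complex poly) \<Rightarrow> bool" where
  "rational_matrix_fun D P Q \<longleftrightarrow> (\<forall>i j. Q i j \<noteq> 0 \<and> coprime (P i j) (Q i j) \<and>
     (\<forall>x. poly (Q i j) x \<noteq> 0 \<longrightarrow> D x $ i $ j = poly (P i j) x / poly (Q i j) x))"

definition poles :: "('n::finite \<Rightarrow> 'n \<Rightarrow> complex poly) \<Rightarrow> complex set" where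
  "poles Q = {x. \<exists>i j. poly (Q i j) x = 0}"

definition Mmat :: "(complex \<Rightarrow> 'n::finite cmat) \<Rightarrow> complex \<Rightarrow> 'n cmat \<Rightarrow> 'n cmat" where
  "Mmat \<Psi> x E = \<Psi> x ** E ** matrix_inv (\<Psi> x)"

definition W2 :: "(complex \<Rightarrow> 'n::finite cmat) \<Rightarrow> complex \<Rightarrow> 'n cmat \<Rightarrow> complex \<Rightarrow> 'n cmat \<Rightarrow> complex" where
  "W2 \<Psi> x1 E1 x2 E2 = trace (Mmat \<Psi> x1 E1 ** Mmat \<Psi> x2 E2) / (x1 - x2)^2"

text \<open>Bivariate polynomials: C[x1,x2] represented as (C[x1])[x2].\<close>
definition poly2 :: "complex poly poly \<Rightarrow> complex \<Rightarrow> complex \<Rightarrow> complex" where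
  "poly2 p x1 x2 = poly (map_poly (\<lambda>c. poly c x1) p) x2"

end

theory Submission
  imports Defs
begin


lemma dep_lemma:
  fixes v :: "'k \<Rightarrow> 'i \<Rightarrow> 'a::idom"
  assumes "finite I" "finite K" "card I < card K"
  shows "\<exists>c. (\<exists>k\<in>K. c k \<noteq> 0) \<and> (\<forall>i\<in>I. (\<Sum>k\<in>K. c k * v k i) = 0)"
  using assms
proof (induction I arbitrary: K v rule: finite_induct)
  case empty
  then obtain k where "k \<in> K" by fastforce
  then show ?case by (intro exI[of _ "\<lambda>_. 1"]) auto
next
  case (insert i I)
  show ?case
  proof (cases "\<forall>k\<in>K. v k i = 0")
    case True
    have "card I < card K" using insert by simp
    from insert.IH[OF insert.prems(1) this] obtain c where
      c: "\<exists>k\<in>K. c k \<noteq> 0" "\<forall>i\<in>I. (\<Sum>k\<in>K. c k * v k i) = 0" by blast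
    show ?thesis using c True by (intro exI[of _ c]) auto
  next
    case False
    then obtain k0 where k0: "k0 \<in> K" "v k0 i \<noteq> 0" by blast
    define a where "a = v k0 i"
    define w where "w k j = a * v k j - v k i * v k0 j" for k j
    have fin': "finite (K - {k0})" using insert by simp
    have "card (K - {k0}) = card K - 1" using k0 insert by simp
    then have cc: "card I < card (K - {k0})" using insert by simp
    from insert.IH[OF fin' cc, of w] obtain c where
      c: "\<exists>k\<in>K - {k0}. c k \<noteq> 0" "\<forall>j\<in>I. (\<Sum>k\<in>K - {k0}. c k * w k j) = 0" by blast
    define c' where "c' k = (if k = k0 then - (\<Sum>k\<in>K - {k0}. c k * v k i) else a * c k)" for k
    have split: "(\<Sum>k\<in>K. c' k * v k j) = c' k0 * v k0 j + (\<Sum>k\<in>K - {k0}. a * c k * v k j)" for j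
      using insert.prems(1) k0 by (simp add: sum.remove c'_def)
    have "(\<Sum>k\<in>K. c' k * v k j) = 0" if "j \<in> insert i I" for j
    proof (cases "j = i")
      case True
      then show ?thesis unfolding split by (simp add: c'_def a_def sum_distrib_left algebra_simps)
    next
      case False
      then have "j \<in> I" using that by auto
      then have "(\<Sum>k\<in>K - {k0}. c k * w k j) = 0" using c by auto
      then have "(\<Sum>k\<in>K - {k0}. a * c k * v k j) - (\<Sum>k\<in>K - {k0}. c k * v k i) * v k0 j = 0"
        by (simp add: w_def algebra_simps sum_subtractf sum_distrib_left sum_distrib_right)
      then show ?thesis unfolding split by (simp add: c'_def algebra_simps)
    qed
    moreover have "\<exists>k\<in>K. c' k \<noteq> 0"
      using c(1) k0 by (auto simp: c'_def a_def)
    ultimately show ?thesis by blast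
  qed
qed



interpretation cs: vector_space "cscale :: complex \<Rightarrow> 'n::finite cmat \<Rightarrow> 'n cmat"
  by (rule cscale_vector_space)

definition emat :: "'n::finite \<Rightarrow> 'n \<Rightarrow> 'n cmat" where
  "emat i j = (\<chi> a b. if a = i \<and> b = j then 1 else 0)"

lemma cscale_sum_entry: "(\<Sum>k\<in>S. cscale (c k) (f k)) $ i $ j = (\<Sum>k\<in>S. c k * f k $ i $ j)"
  by (simp add: cscale_def)

lemma sum_delta2: "(\<Sum>x\<in>UNIV. \<Sum>y\<in>UNIV. if (a::'b::finite) = x \<and> (b::'c::finite) = y then f x y else (0::'a::comm_monoid_add)) = f a b"
proof -
  have "(\<Sum>x\<in>UNIV. \<Sum>y\<in>UNIV. if a = x \<and> b = y then f x y else (0::'a)) =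
        (\<Sum>x\<in>UNIV. if a = x then (\<Sum>y\<in>UNIV. if b = y then f x y else 0) else 0)"
    by (intro sum.cong) auto
  also have "\<dots> = f a b" by simp
  finally show ?thesis .
qed

lemma matrix_emat_expand: "X = (\<Sum>i\<in>UNIV. \<Sum>j\<in>UNIV. cscale (X $ i $ j) (emat i j :: 'n::finite cmat))"
  by (simp add: vec_eq_iff cscale_def emat_def if_distrib[of "\<lambda>t. _ * t"] sum_delta2 cong: if_cong)

lemma cs_indep_finite:
  assumes "cs.independent (B :: 'n::finite cmat set)"
  shows "finite B"
proof (rule ccontr)
  assume "infinite B"
  then obtain S where S: "S \<subseteq> B" "finite S" "card S = CARD('n \<times> 'n) + 1"
    using infinite_arbitrarily_large by blast
  have "\<exists>c. (\<exists>k\<in>S. c k \<noteq> 0) \<and> (\<forall>ij\<in>UNIV. (\<Sum>k\<in>S. c k * (\<lambda>k ij. k $ fst ij $ snd ij) k ij) = (0::complex))"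
    by (rule dep_lemma) (use S in auto)
  then obtain c where c: "\<exists>k\<in>S. c k \<noteq> 0" "\<And>i j. (\<Sum>k\<in>S. c k * k $ i $ j) = 0"
    by fastforce
  have "(\<Sum>k\<in>S. cscale (c k) k) = 0"
    unfolding vec_eq_iff
  proof (intro allI)
    fix i j show "(\<Sum>k\<in>S. cscale (c k) k) $ i $ j = 0 $ i $ j"
      using c(2)[of i j] by (simp only: cscale_sum_entry) simp
  qed
  with assms S c(1) show False
    unfolding cs.independent_explicit_finite_subsets by blast
qed

lemma basis_coords:
  fixes g :: "'n::finite cmat set"
  assumes "csubspace g"
  shows "\<exists>b L. (\<forall>l<cdim g. b l \<in> g) \<and>
     (\<forall>v\<in>g. v = (\<Sum>l<cdim g. cscale (\<Sum>i\<in>UNIV. \<Sum>j\<in>UNIV. v$i$j * L l i j) (b l)))"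
proof -
  obtain B where B: "B \<subseteq> g" "cs.independent B" "g \<subseteq> cs.span B" "card B = cs.dim g"
    using cs.basis_exists by blast
  have fB: "finite B" using cs_indep_finite[OF B(2)] .
  have dg: "cdim g = card B" using B(4) by (simp add: cdim_def)
  obtain h where h: "bij_betw h {0..<card B} B" using ex_bij_betw_nat_finite[OF fB] by blast
  define E' where "E' = cs.extend_basis B"
  have E': "cs.independent E'" "cs.span E' = UNIV" "B \<subseteq> E'"
    unfolding E'_def
    using cs.independent_extend_basis[OF B(2)] cs.extend_basis_superset[OF B(2)] cs.span_extend_basis[OF B(2)]
    by auto
  define L where "L l i j = cs.representation E' (emat i j) (h l)" for l i j
  have lin: "cs.representation E' X b = (\<Sum>i\<in>UNIV. \<Sum>j\<in>UNIV. X$i$j * cs.representation E' (emat i j) b)" for X b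
  proof -
    have "cs.representation E' X b = cs.representation E' (\<Sum>i\<in>UNIV. \<Sum>j\<in>UNIV. cscale (X $ i $ j) (emat i j)) b"
      using matrix_emat_expand[of X] by simp
    also have "\<dots> = (\<Sum>i\<in>UNIV. \<Sum>j\<in>UNIV. X$i$j * cs.representation E' (emat i j) b)"
      using E' by (simp add: cs.representation_sum cs.representation_scale)
    finally show ?thesis .
  qed
  have "v = (\<Sum>l<cdim g. cscale (\<Sum>i\<in>UNIV. \<Sum>j\<in>UNIV. v$i$j * L l i j) (h l))" if v: "v \<in> g" for v
  proof -
    have vs: "v \<in> cs.span B" using v B by auto
    have "v = (\<Sum>b\<in>B. cscale (cs.representation B v b) b)"
      using cs.sum_representation_eq[OF B(2) vs fB] by simp
    also have "\<dots> = (\<Sum>b\<in>B. cscale (cs.representation E' v b) b)"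
      using cs.representation_extend[OF E'(1) vs E'(3)] by simp
    also have "\<dots> = (\<Sum>l\<in>{0..<card B}. cscale (cs.representation E' v (h l)) (h l))"
      using sum.reindex_bij_betw[OF h, of "\<lambda>b. cscale (cs.representation E' v b) b"] by simp
    also have "\<dots> = (\<Sum>l<cdim g. cscale (\<Sum>i\<in>UNIV. \<Sum>j\<in>UNIV. v$i$j * L l i j) (h l))"
      unfolding dg L_def lin[of v] by (simp add: atLeast0LessThan)
    finally show ?thesis .
  qed
  moreover have "\<forall>l<cdim g. h l \<in> g"
    using h B(1) dg by (auto simp: bij_betw_def)
  ultimately show ?thesis by blast
qed



definition mderiv :: "(complex \<Rightarrow> 'n::finite cmat) \<Rightarrow> 'n cmat \<Rightarrow> complex \<Rightarrow> bool" where
  "mderiv F F' x \<longleftrightarrow> (\<forall>i j. ((\<lambda>y. F y $ i $ j) has_field_derivative F' $ i $ j) (at x))"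

lemma mderiv_mult:
  assumes "mderiv F F' x" "mderiv H H' x"
  shows "mderiv (\<lambda>y. F y ** H y) (F' ** H x + F x ** H') x"
  unfolding mderiv_def
proof (intro allI)
  fix i j
  have "((\<lambda>y. \<Sum>k\<in>UNIV. F y $ i $ k * H y $ k $ j) has_field_derivative
         (\<Sum>k\<in>UNIV. F' $ i $ k * H x $ k $ j + F x $ i $ k * H' $ k $ j)) (at x)"
    using assms unfolding mderiv_def
    by (intro DERIV_sum) (auto intro!: derivative_eq_intros)
  then show "((\<lambda>y. (F y ** H y) $ i $ j) has_field_derivative (F' ** H x + F x ** H') $ i $ j) (at x)"
    by (simp add: matrix_matrix_mult_def sum.distrib)
qed

lemma mderiv_const: "mderiv (\<lambda>y. E) 0 x"
  unfolding mderiv_def by (auto intro!: derivative_eq_intros)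

lemma mderiv_unique: "mderiv F A x \<Longrightarrow> mderiv F B x \<Longrightarrow> A = B"
  unfolding mderiv_def vec_eq_iff
proof (intro allI)
  fix i j assume "\<forall>i j. ((\<lambda>y. F y $ i $ j) has_field_derivative A $ i $ j) (at x)"
     "\<forall>i j. ((\<lambda>y. F y $ i $ j) has_field_derivative B $ i $ j) (at x)"
  then show "A $ i $ j = B $ i $ j" using DERIV_unique by metis
qed

lemma mderiv_transform:
  assumes "mderiv F A x" "open S" "x \<in> S" "\<And>y. y \<in> S \<Longrightarrow> F y = H y"
  shows "mderiv H A x"
  using assms(1) unfolding mderiv_def
proof (intro allI)
  fix i j assume "\<forall>i j. ((\<lambda>y. F y $ i $ j) has_field_derivative A $ i $ j) (at x)"
  then have "((\<lambda>y. F y $ i $ j) has_field_derivative A $ i $ j) (at x)" by blast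
  from has_field_derivative_transform_within_open[OF this assms(2,3)] assms(4)
  show "((\<lambda>y. H y $ i $ j) has_field_derivative A $ i $ j) (at x)" by simp
qed

lemma invertible_matrix_inv:
  assumes "invertible (A :: 'a::semiring_1^'n^'m)"
  shows "A ** matrix_inv A = mat 1" "matrix_inv A ** A = mat 1"
proof -
  have "\<exists>A'. A ** A' = mat 1 \<and> A' ** A = mat 1" using assms unfolding invertible_def by blast
  from someI_ex[OF this] show "A ** matrix_inv A = mat 1" "matrix_inv A ** A = mat 1"
    unfolding matrix_inv_def by blast+
qed

lemma inv_entry:
  fixes A :: "complex^'n::finite^'n"
  assumes "invertible A"
  shows "matrix_inv A $ k $ j = det (\<chi> a b. if b = k then mat 1 $ a $ j else A $ a $ b) / det A"
proof -
  have d: "det A \<noteq> 0" using assms invertible_det_nz by blast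
  have "A *v (\<chi> i. matrix_inv A $ i $ j) = (\<chi> a. mat 1 $ a $ j)"
  proof -
    have "A *v (\<chi> i. matrix_inv A $ i $ j) = (\<chi> a. (A ** matrix_inv A) $ a $ j)"
      by (simp add: vec_eq_iff matrix_vector_mult_def matrix_matrix_mult_def)
    then show ?thesis using invertible_matrix_inv(1)[OF assms] by simp
  qed
  from cramer[OF d, THEN iffD1, OF this]
  have "(\<chi> i. matrix_inv A $ i $ j) $ k = (\<chi> k. det (\<chi> i ja. if ja = k then (\<chi> a. mat 1 $ a $ j) $ i else A $ i $ ja) / det A) $ k"
    by simp
  then show ?thesis unfolding vec_lambda_beta .
qed

lemma holo_det:
  assumes "\<And>i j. (\<lambda>x. F x $ i $ j) holomorphic_on S"
  shows "(\<lambda>x. det (F x :: complex^'n::finite^'n)) holomorphic_on S"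
  unfolding det_def using assms by (intro holomorphic_on_sum holomorphic_on_mult holomorphic_on_prod holomorphic_on_const)



lemma mm_add_r: "((A::'a::semiring_1^'n::finite^'m) + B) ** C = A ** C + B ** C"
  by (simp add: vec_eq_iff matrix_matrix_mult_def sum.distrib distrib_right)
lemma mm_diff_l: "(A::'a::ring_1^'n::finite^'m) ** (B - C) = A ** B - A ** C"
  by (simp add: vec_eq_iff matrix_matrix_mult_def sum_subtractf right_diff_distrib)
lemma mm_diff_r: "((A::'a::ring_1^'n::finite^'m) - B) ** C = A ** C - B ** C"
  by (simp add: vec_eq_iff matrix_matrix_mult_def sum_subtractf left_diff_distrib)
lemma mm_neg_l: "(- (A::'a::ring_1^'n::finite^'m)) ** C = - (A ** C)"
  by (simp add: vec_eq_iff matrix_matrix_mult_def sum_negf)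

lemma mm_neg_r: "(A::'a::ring_1^'n::finite^'m) ** (- C) = - (A ** C)"
  by (simp add: vec_eq_iff matrix_matrix_mult_def sum_negf)

lemma conj_bounded_linear:
  "bounded_linear (\<lambda>X::'n::finite cmat. A ** X ** B)"
proof -
  have "linear (\<lambda>X::'n::finite cmat. A ** X ** B)"
    by (rule linearI) (simp_all add: matrix_add_ldistrib mm_add_r matrix_scalar_ac scalar_matrix_assoc)
  then show ?thesis using linear_conv_bounded_linear by blast
qed

lemma conj_in_lie:
  fixes G :: "'n::finite cmat set"
  assumes G: "complex_matrix_lie_group G" and A: "A \<in> G" and E: "E \<in> matrix_lie_algebra G"
  shows "A ** E ** matrix_inv A \<in> matrix_lie_algebra G"
proof -
  obtain \<gamma> :: "real \<Rightarrow> 'n cmat" where g: "\<gamma> 0 = mat 1" "\<forall>t. \<gamma> t \<in> G"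
    "(\<gamma> has_vector_derivative E) (at 0)"
    using E unfolding matrix_lie_algebra_def by blast
  have inv: "invertible A" using G A unfolding complex_matrix_lie_group_def by blast
  have Ai: "matrix_inv A \<in> G" using G A unfolding complex_matrix_lie_group_def by blast
  have mul: "\<And>X Y. X \<in> G \<Longrightarrow> Y \<in> G \<Longrightarrow> X ** Y \<in> G"
    using G unfolding complex_matrix_lie_group_def by blast
  define \<delta> where "\<delta> t = A ** \<gamma> t ** matrix_inv A" for t
  have "\<delta> 0 = mat 1" using invertible_matrix_inv(1)[OF inv] g(1) by (simp add: \<delta>_def)
  moreover have "\<forall>t. \<delta> t \<in> G" using mul A Ai g(2) by (simp add: \<delta>_def)
  moreover have "(\<delta> has_vector_derivative A ** E ** matrix_inv A) (at 0)"
    unfolding \<delta>_def using bounded_linear.has_vector_derivative[OF conj_bounded_linear g(3)] .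
  ultimately show ?thesis unfolding matrix_lie_algebra_def by blast
qed

lemma mderiv_conj:
  fixes \<Psi> :: "complex \<Rightarrow> 'n::finite cmat"
  assumes U: "open U" "x \<in> U"
    and inv: "\<And>y. y \<in> U \<Longrightarrow> invertible (\<Psi> y)"
    and Pd: "mderiv \<Psi> (Dx ** \<Psi> x) x"
    and hol: "\<And>i j. (\<lambda>y. matrix_inv (\<Psi> y) $ i $ j) holomorphic_on U"
  shows "mderiv (\<lambda>y. \<Psi> y ** E ** matrix_inv (\<Psi> y))
           (commutator Dx (\<Psi> x ** E ** matrix_inv (\<Psi> x))) x"
proof -
  define \<Phi> where "\<Phi> y = matrix_inv (\<Psi> y)" for y
  define \<Phi>' where "\<Phi>' = (\<chi> i j. deriv (\<lambda>y. \<Phi> y $ i $ j) x)"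
  have Phd: "mderiv \<Phi> \<Phi>' x"
    unfolding mderiv_def \<Phi>'_def using holomorphic_derivI[OF hol U] by (simp add: \<Phi>_def)
  have d1: "mderiv (\<lambda>y. \<Phi> y ** \<Psi> y) (\<Phi>' ** \<Psi> x + \<Phi> x ** (Dx ** \<Psi> x)) x"
    by (rule mderiv_mult[OF Phd Pd])
  have d2: "mderiv (\<lambda>y. \<Phi> y ** \<Psi> y) 0 x"
    by (rule mderiv_transform[OF mderiv_const U]) (simp add: \<Phi>_def invertible_matrix_inv(2)[OF inv])
  have e: "\<Phi>' ** \<Psi> x + \<Phi> x ** (Dx ** \<Psi> x) = 0" using mderiv_unique[OF d1 d2] .
  have PP: "\<Psi> x ** \<Phi> x = mat 1" using invertible_matrix_inv(1)[OF inv[OF U(2)]] by (simp add: \<Phi>_def)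
  have "\<Phi>' = \<Phi>' ** (\<Psi> x ** \<Phi> x)" using PP by simp
  also have "\<dots> = (\<Phi>' ** \<Psi> x) ** \<Phi> x" by (simp add: matrix_mul_assoc)
  also have "\<Phi>' ** \<Psi> x = - (\<Phi> x ** (Dx ** \<Psi> x))" using e by (simp add: eq_neg_iff_add_eq_0)
  also have "(- (\<Phi> x ** (Dx ** \<Psi> x))) ** \<Phi> x = - (\<Phi> x ** Dx)"
    by (simp add: mm_neg_l matrix_mul_assoc[symmetric] PP)
  finally have Phi': "\<Phi>' = - (\<Phi> x ** Dx)" .
  have d3: "mderiv (\<lambda>y. \<Psi> y ** E) (Dx ** \<Psi> x ** E + \<Psi> x ** 0) x"
    by (rule mderiv_mult[OF Pd mderiv_const])
  have d4: "mderiv (\<lambda>y. \<Psi> y ** E ** \<Phi> y) ((Dx ** \<Psi> x ** E + \<Psi> x ** 0) ** \<Phi> x + \<Psi> x ** E ** \<Phi>') x"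
    by (rule mderiv_mult[OF d3 Phd])
  have "(Dx ** \<Psi> x ** E + \<Psi> x ** 0) ** \<Phi> x + \<Psi> x ** E ** \<Phi>' = commutator Dx (\<Psi> x ** E ** \<Phi> x)"
    unfolding Phi' commutator_def
    by (simp add: matrix_mul_assoc mm_add_r mm_neg_r)
  with d4 show ?thesis by (simp add: \<Phi>_def)
qed



lemma poly2_alt: "poly2 p x1 x2 = poly (poly p [:x2:]) x1"
  unfolding poly2_def
proof (induction p)
  case 0 then show ?case by simp
next
  case (pCons a p)
  have "map_poly (\<lambda>c. poly c x1) (pCons a p) = pCons (poly a x1) (map_poly (\<lambda>c. poly c x1) p)"
    by (rule map_poly_pCons) simp
  then show ?case using pCons.IH by simp
qed

definition pd1 :: "complex poly poly \<Rightarrow> complex poly poly" where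
  "pd1 p = map_poly pderiv p"

lemma pd1_eval: "poly (pd1 p) [:c:] = pderiv (poly p [:c:])"
  unfolding pd1_def
proof (induction p)
  case 0 then show ?case by simp
next
  case (pCons a p)
  have "map_poly pderiv (pCons a p) = pCons (pderiv a) (map_poly pderiv p)"
    by (rule map_poly_pCons) simp
  then show ?case using pCons.IH by (simp add: pderiv_add pderiv_mult pderiv_pCons pderiv_smult)
qed

lemma poly2_deriv: "((\<lambda>y. poly2 p y x2) has_field_derivative poly2 (pd1 p) x x2) (at x)"
  unfolding poly2_alt pd1_eval by (rule poly_DERIV)

definition lift :: "complex poly \<Rightarrow> complex poly poly" where "lift r = [:r:]"
definition X1 :: "complex poly poly" where "X1 = [:[:0,1:]:]"
definition X2 :: "complex poly poly" where "X2 = [:0,1:]"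

lemma poly2_lift[simp]: "poly2 (lift r) x1 x2 = poly r x1" by (simp add: poly2_alt lift_def)
lemma poly2_X1[simp]: "poly2 X1 x1 x2 = x1" by (simp add: poly2_alt X1_def)
lemma poly2_X2[simp]: "poly2 X2 x1 x2 = x2" by (simp add: poly2_alt X2_def)
lemma poly2_add[simp]: "poly2 (p + q) x1 x2 = poly2 p x1 x2 + poly2 q x1 x2" by (simp add: poly2_alt)
lemma poly2_diff[simp]: "poly2 (p - q) x1 x2 = poly2 p x1 x2 - poly2 q x1 x2" by (simp add: poly2_alt)
lemma poly2_mult[simp]: "poly2 (p * q) x1 x2 = poly2 p x1 x2 * poly2 q x1 x2" by (simp add: poly2_alt)
lemma poly2_power[simp]: "poly2 (p ^ k) x1 x2 = poly2 p x1 x2 ^ k" by (simp add: poly2_alt poly_power)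
lemma poly2_of_nat[simp]: "poly2 (of_nat k) x1 x2 = of_nat k" by (simp add: poly2_alt of_nat_poly)
lemma poly2_0[simp]: "poly2 0 x1 x2 = 0" by (simp add: poly2_alt)
lemma poly2_1[simp]: "poly2 1 x1 x2 = 1" by (simp add: poly2_alt)
lemma poly2_numeral[simp]: "poly2 (numeral n) x1 x2 = numeral n" by (simp add: poly2_alt)
lemma poly2_sum[simp]: "poly2 (\<Sum>i\<in>S. f i) x1 x2 = (\<Sum>i\<in>S. poly2 (f i) x1 x2)"
  by (induction S rule: infinite_finite_induct) auto

lemma X1_X2_nz: "X1 - X2 \<noteq> 0"
proof
  assume "X1 - X2 = 0"
  then have "poly2 (X1 - X2) 1 0 = 0" by simp
  then show False by simp
qed

lemma lift_nz: "r \<noteq> 0 \<Longrightarrow> lift r \<noteq> 0" by (simp add: lift_def)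



lemma cscale_entry[simp]: "cscale c B $ i $ j = c * B $ i $ j"
  by (simp add: cscale_def)

lemma quot_pow_deriv:
  fixes S P :: "complex \<Rightarrow> complex"
  assumes "(S has_field_derivative S') (at y)" "(P has_field_derivative P') (at y)" "P y \<noteq> 0"
  shows "((\<lambda>z. S z / P z ^ k) has_field_derivative (P y * S' - of_nat k * P' * S y) / P y ^ Suc k) (at y)"
proof -
  have "((\<lambda>z. S z / P z ^ k) has_field_derivative
     (S' * P y ^ k - S y * (of_nat k * P y ^ (k - 1) * P')) / (P y ^ k * P y ^ k)) (at y)"
    using assms by (auto intro!: derivative_eq_intros)
  also have "(S' * P y ^ k - S y * (of_nat k * P y ^ (k - 1) * P')) / (P y ^ k * P y ^ k)
       = (P y * S' - of_nat k * P' * S y) / P y ^ Suc k"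
  proof (cases k)
    case 0 then show ?thesis using assms(3) by (simp add: field_simps)
  next
    case (Suc k')
    then show ?thesis using assms(3) by (simp add: field_simps power_add[symmetric])
  qed
  finally show ?thesis .
qed

lemma Tident:
  fixes P P' :: complex
  assumes "P \<noteq> 0"
  shows "P * (\<Sum>l<d. \<Sum>m<d. \<nu> l * (e' l m * u m + e l m * ((\<Sum>j<d. G m j * u j) / P)))
         - of_nat k * P' * (\<Sum>l<d. \<Sum>m<d. \<nu> l * e l m * u m)
       = (\<Sum>l<d. \<Sum>m<d. \<nu> l * (P * e' l m + (\<Sum>j<d. e l j * G j m) - of_nat k * P' * e l m) * u m)"
proof -
  have sw: "(\<Sum>m<d. e l m * (\<Sum>j<d. G m j * u j)) = (\<Sum>m<d. (\<Sum>j<d. e l j * G j m) * u m)" for l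
  proof -
    have "(\<Sum>m<d. e l m * (\<Sum>j<d. G m j * u j)) = (\<Sum>m<d. \<Sum>j<d. e l m * G m j * u j)"
      by (simp add: sum_distrib_left mult.assoc)
    also have "\<dots> = (\<Sum>j<d. \<Sum>m<d. e l m * G m j * u j)" by (rule sum.swap)
    also have "\<dots> = (\<Sum>m<d. (\<Sum>j<d. e l j * G j m) * u m)"
      by (simp add: sum_distrib_right)
    finally show ?thesis .
  qed
  have "P * (\<Sum>l<d. \<Sum>m<d. \<nu> l * (e' l m * u m + e l m * ((\<Sum>j<d. G m j * u j) / P)))
      = (\<Sum>l<d. \<nu> l * ((\<Sum>m<d. P * e' l m * u m) + (\<Sum>m<d. e l m * (\<Sum>j<d. G m j * u j))))"
  proof -
    have "P * (\<nu> l * (e' l m * u m + e l m * ((\<Sum>j<d. G m j * u j) / P)))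
        = \<nu> l * (P * e' l m * u m + e l m * (\<Sum>j<d. G m j * u j))" for l m
      using assms by (simp add: field_simps)
    note pt = this
    have "P * (\<Sum>l<d. \<Sum>m<d. \<nu> l * (e' l m * u m + e l m * ((\<Sum>j<d. G m j * u j) / P)))
       = (\<Sum>l<d. \<Sum>m<d. P * (\<nu> l * (e' l m * u m + e l m * ((\<Sum>j<d. G m j * u j) / P))))"
      by (simp only: sum_distrib_left)
    also have "\<dots> = (\<Sum>l<d. \<Sum>m<d. \<nu> l * (P * e' l m * u m + e l m * (\<Sum>j<d. G m j * u j)))"
      by (intro sum.cong refl pt)
    also have "\<dots> = (\<Sum>l<d. \<nu> l * ((\<Sum>m<d. P * e' l m * u m) + (\<Sum>m<d. e l m * (\<Sum>j<d. G m j * u j))))"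
      by (simp only: distrib_left sum.distrib sum_distrib_left)
    finally show ?thesis .
  qed
  also have "\<dots> = (\<Sum>l<d. \<nu> l * ((\<Sum>m<d. P * e' l m * u m) + (\<Sum>m<d. (\<Sum>j<d. e l j * G j m) * u m)))"
    by (simp add: sw)
  finally have 1: "P * (\<Sum>l<d. \<Sum>m<d. \<nu> l * (e' l m * u m + e l m * ((\<Sum>j<d. G m j * u j) / P)))
      = (\<Sum>l<d. \<nu> l * ((\<Sum>m<d. P * e' l m * u m) + (\<Sum>m<d. (\<Sum>j<d. e l j * G j m) * u m)))" .
  show ?thesis unfolding 1
    by (simp add: sum_distrib_left sum.distrib sum_subtractf algebra_simps)
qed

definition ell :: "(nat \<Rightarrow> 'n \<Rightarrow> 'n \<Rightarrow> complex) \<Rightarrow> nat \<Rightarrow> 'n::finite cmat \<Rightarrow> complex" where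
  "ell L l X = (\<Sum>i\<in>UNIV. \<Sum>j\<in>UNIV. X $ i $ j * L l i j)"

lemma ell_lin: "ell L l (\<Sum>m\<in>S. cscale (c m) (B m)) = (\<Sum>m\<in>S. c m * ell L l (B m))"
proof -
  have "ell L l (\<Sum>m\<in>S. cscale (c m) (B m)) = (\<Sum>i\<in>UNIV. \<Sum>j\<in>UNIV. \<Sum>m\<in>S. c m * (B m $ i $ j * L l i j))"
    by (simp add: ell_def cscale_sum_entry sum_distrib_right mult.assoc)
  also have "\<dots> = (\<Sum>i\<in>UNIV. \<Sum>m\<in>S. \<Sum>j\<in>UNIV. c m * (B m $ i $ j * L l i j))"
    by (simp add: sum.swap[of _ S])
  also have "\<dots> = (\<Sum>m\<in>S. \<Sum>i\<in>UNIV. \<Sum>j\<in>UNIV. c m * (B m $ i $ j * L l i j))"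
    by (rule sum.swap)
  also have "\<dots> = (\<Sum>m\<in>S. c m * ell L l (B m))"
    by (simp add: ell_def sum_distrib_left)
  finally show ?thesis .
qed

lemma comm_lin: "commutator A (\<Sum>m\<in>S. cscale (c m) (B m)) = (\<Sum>m\<in>S. cscale (c m) (commutator A (B m :: 'n::finite cmat)))"
proof -
  have "\<And>i j. (commutator A (\<Sum>m\<in>S. cscale (c m) (B m))) $ i $ j = (\<Sum>m\<in>S. cscale (c m) (commutator A (B m))) $ i $ j"
  proof -
    fix i j
    have "(commutator A (\<Sum>m\<in>S. cscale (c m) (B m))) $ i $ j =
      (\<Sum>k\<in>UNIV. A $ i $ k * (\<Sum>m\<in>S. c m * B m $ k $ j)) - (\<Sum>k\<in>UNIV. (\<Sum>m\<in>S. c m * B m $ i $ k) * A $ k $ j)"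
      by (simp add: commutator_def matrix_matrix_mult_def cscale_sum_entry)
    also have "\<dots> = (\<Sum>m\<in>S. c m * ((\<Sum>k\<in>UNIV. A $ i $ k * B m $ k $ j) - (\<Sum>k\<in>UNIV. B m $ i $ k * A $ k $ j)))"
      by (simp add: sum_distrib_left sum_distrib_right right_diff_distrib sum_subtractf sum.swap[of _ S] algebra_simps)
    also have "\<dots> = (\<Sum>m\<in>S. cscale (c m) (commutator A (B m))) $ i $ j"
      by (simp add: cscale_sum_entry commutator_def matrix_matrix_mult_def)
    finally show "?thesis i j" .
  qed
  then show ?thesis by (simp add: vec_eq_iff)
qed

lemma trace_lin: "trace ((\<Sum>l\<in>S. cscale (c l) (B l)) ** N) = (\<Sum>l\<in>S. c l * trace (B l ** (N :: 'n::finite cmat)))"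
proof -
  have "trace ((\<Sum>l\<in>S. cscale (c l) (B l)) ** N) = (\<Sum>i\<in>UNIV. \<Sum>k\<in>UNIV. \<Sum>l\<in>S. c l * (B l $ i $ k * N $ k $ i))"
    by (simp add: trace_def matrix_matrix_mult_def cscale_sum_entry sum_distrib_right mult.assoc)
  also have "\<dots> = (\<Sum>i\<in>UNIV. \<Sum>l\<in>S. \<Sum>k\<in>UNIV. c l * (B l $ i $ k * N $ k $ i))"
    by (simp add: sum.swap[of _ S])
  also have "\<dots> = (\<Sum>l\<in>S. \<Sum>i\<in>UNIV. \<Sum>k\<in>UNIV. c l * (B l $ i $ k * N $ k $ i))"
    by (rule sum.swap)
  also have "\<dots> = (\<Sum>l\<in>S. c l * trace (B l ** N))"
    by (simp add: trace_def matrix_matrix_mult_def sum_distrib_left)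
  finally show ?thesis .
qed

lemma ell_deriv:
  assumes "mderiv F F' x"
  shows "((\<lambda>y. ell L l (F y)) has_field_derivative ell L l F') (at x)"
  using assms unfolding ell_def mderiv_def
  by (auto intro!: DERIV_sum derivative_eq_intros)



definition qpoly :: "('n::finite \<Rightarrow> 'n \<Rightarrow> complex poly) \<Rightarrow> complex poly" where
  "qpoly Q = (\<Prod>ab\<in>UNIV. Q (fst ab) (snd ab))"

definition Dp :: "('n::finite \<Rightarrow> 'n \<Rightarrow> complex poly) \<Rightarrow> ('n \<Rightarrow> 'n \<Rightarrow> complex poly) \<Rightarrow> 'n \<Rightarrow> 'n \<Rightarrow> complex poly" where
  "Dp P Q i k = P i k * (\<Prod>ab\<in>UNIV - {(i,k)}. Q (fst ab) (snd ab))"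

lemma qpoly_nz: "rational_matrix_fun D P Q \<Longrightarrow> qpoly Q \<noteq> 0"
  unfolding qpoly_def rational_matrix_fun_def by (simp add: prod_zero_iff)

lemma qpoly_eval_nz: "x \<notin> poles Q \<Longrightarrow> poly (qpoly Q) x \<noteq> 0"
  unfolding qpoly_def poles_def by (auto simp: poly_prod prod_zero_iff)

lemma Dp_eval:
  assumes "rational_matrix_fun D P Q" "x \<notin> poles Q"
  shows "poly (Dp P Q i k) x = poly (qpoly Q) x * D x $ i $ k"
proof -
  have nz: "poly (Q i k) x \<noteq> 0" using assms(2) unfolding poles_def by auto
  have Dx: "D x $ i $ k = poly (P i k) x / poly (Q i k) x"
    using assms(1) nz unfolding rational_matrix_fun_def by blast
  have "poly (qpoly Q) x = poly (Q i k) x * (\<Prod>ab\<in>UNIV - {(i,k)}. poly (Q (fst ab) (snd ab)) x)"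
    unfolding qpoly_def poly_prod
    using prod.remove[of UNIV "(i,k)" "\<lambda>ab. poly (Q (fst ab) (snd ab)) x"] by simp
  then show ?thesis using nz unfolding Dx Dp_def by (simp add: poly_prod)
qed

definition Gam :: "('n::finite \<Rightarrow> 'n \<Rightarrow> complex poly) \<Rightarrow> ('n \<Rightarrow> 'n \<Rightarrow> complex poly) \<Rightarrow> (nat \<Rightarrow> 'n \<Rightarrow> 'n \<Rightarrow> complex)
   \<Rightarrow> (nat \<Rightarrow> 'n cmat) \<Rightarrow> nat \<Rightarrow> nat \<Rightarrow> complex poly" where
  "Gam P Q L b l m = (\<Sum>i\<in>UNIV. \<Sum>j\<in>UNIV. smult (L l i j)
      (\<Sum>k\<in>UNIV. Dp P Q i k * [:b m $ k $ j:] - [:b m $ i $ k:] * Dp P Q k j))"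

lemma Gam_eval:
  assumes "rational_matrix_fun D P Q" "x \<notin> poles Q"
  shows "poly (Gam P Q L b l m) x = poly (qpoly Q) x * ell L l (commutator (D x) (b m))"
proof -
  have "poly (Gam P Q L b l m) x = (\<Sum>i\<in>UNIV. \<Sum>j\<in>UNIV. L l i j *
      (\<Sum>k\<in>UNIV. poly (qpoly Q) x * D x $ i $ k * b m $ k $ j - b m $ i $ k * (poly (qpoly Q) x * D x $ k $ j)))"
    unfolding Gam_def by (simp add: poly_sum Dp_eval[OF assms] mult_ac)
  also have "\<dots> = poly (qpoly Q) x * (\<Sum>i\<in>UNIV. \<Sum>j\<in>UNIV.
      ((\<Sum>k\<in>UNIV. D x $ i $ k * b m $ k $ j) - (\<Sum>k\<in>UNIV. b m $ i $ k * D x $ k $ j)) * L l i j)"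
    by (simp add: sum_distrib_left sum_distrib_right sum_subtractf algebra_simps)
  also have "\<dots> = poly (qpoly Q) x * ell L l (commutator (D x) (b m))"
    by (simp add: ell_def commutator_def matrix_matrix_mult_def)
  finally show ?thesis .
qed



primrec Rseq :: "nat \<Rightarrow> complex poly poly \<Rightarrow> (nat \<Rightarrow> nat \<Rightarrow> complex poly poly) \<Rightarrow> nat \<Rightarrow> nat \<Rightarrow> nat \<Rightarrow> complex poly poly" where
  "Rseq d p Gt 0 l m = (if l = m then 1 else 0)"
| "Rseq d p Gt (Suc k) l m = p * pd1 (Rseq d p Gt k l m) + (\<Sum>j<d. Rseq d p Gt k l j * Gt j m)
      - of_nat k * pd1 p * Rseq d p Gt k l m"

lemma u_deriv_alg:
  fixes a t qq :: complex and Gm :: "nat \<Rightarrow> complex" and ell :: "nat \<Rightarrow> complex"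
  assumes "t \<noteq> 0" "qq \<noteq> 0" "m < d"
  shows "(((\<Sum>j<d. ell j * Gm j / qq)) * t\<^sup>2 - ell m * (2 * t)) / (t\<^sup>2 * t\<^sup>2)
    = (\<Sum>j<d. (Gm j * t - (if m = j then 2 * qq else 0)) * (ell j / t\<^sup>2)) / (qq * t)"
proof -
  have "(\<Sum>j<d. (Gm j * t - (if m = j then 2 * qq else 0)) * (ell j / t\<^sup>2))
      = (\<Sum>j<d. Gm j * t * (ell j / t\<^sup>2)) - (\<Sum>j<d. (if m = j then 2 * qq * (ell j / t\<^sup>2) else 0))"
  proof -
    have "(\<Sum>j<d. (Gm j * t - (if m = j then 2 * qq else 0)) * (ell j / t\<^sup>2))
        = (\<Sum>j<d. Gm j * t * (ell j / t\<^sup>2) - (if m = j then 2 * qq * (ell j / t\<^sup>2) else 0))"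
      by (intro sum.cong refl) (simp add: left_diff_distrib diff_divide_distrib)
    then show ?thesis by (simp only: sum_subtractf)
  qed
  also have "(\<Sum>j<d. (if m = j then 2 * qq * (ell j / t\<^sup>2) else 0)) = 2 * qq * (ell m / t\<^sup>2)"
    using assms(3) by (simp add: sum.delta)
  finally have e: "(\<Sum>j<d. (Gm j * t - (if m = j then 2 * qq else 0)) * (ell j / t\<^sup>2))
     = (\<Sum>j<d. Gm j * t * (ell j / t\<^sup>2)) - 2 * qq * (ell m / t\<^sup>2)" .
  have s1: "(\<Sum>j<d. Gm j * t * (ell j / t\<^sup>2)) = (t / t\<^sup>2) * (\<Sum>j<d. ell j * Gm j)"
    by (simp add: sum_distrib_left mult_ac)
  have s2: "(\<Sum>j<d. ell j * Gm j / qq) = (\<Sum>j<d. ell j * Gm j) / qq"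
    by (simp add: sum_divide_distrib)
  show ?thesis unfolding e s1 s2 using assms(1,2)
    by (simp add: field_simps power2_eq_square)
qed



theorem mainTheorem3:
  fixes G :: "'n::finite cmat set"
    and D \<Psi> :: "complex \<Rightarrow> 'n cmat"
    and P Q :: "'n \<Rightarrow> 'n \<Rightarrow> complex poly"
    and U :: "complex set"
    and E1 E2 :: "'n cmat"
  assumes G: "reductive_complex_matrix_group G"
    and D_rat: "rational_matrix_fun D P Q"
    and U: "open U" "connected U" "simply_connected U" "U \<inter> poles Q = {}"
    and D_g: "\<forall>x\<in>U. D x \<in> matrix_lie_algebra G"
    and Psi_G: "\<forall>x\<in>U. \<Psi> x \<in> G"
    and Psi_hol: "\<forall>i j. (\<lambda>x. \<Psi> x $ i $ j) holomorphic_on U"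
    and Psi_ode: "\<forall>x\<in>U. \<forall>i j. ((\<lambda>y. \<Psi> y $ i $ j) has_field_derivative (D x ** \<Psi> x) $ i $ j) (at x)"
    and E: "E1 \<in> matrix_lie_algebra G" "E2 \<in> matrix_lie_algebra G"
  shows "\<exists>\<alpha> :: nat \<Rightarrow> complex poly poly.
           (\<exists>k \<le> (cdim (matrix_lie_algebra G))^2. \<alpha> k \<noteq> 0) \<and>
           (\<forall>x1\<in>U. \<forall>x2\<in>U. x1 \<noteq> x2 \<longrightarrow>
              (\<Sum>k = 0..(cdim (matrix_lie_algebra G))^2.
                 poly2 (\<alpha> k) x1 x2 * (deriv ^^ k) (\<lambda>y. W2 \<Psi> y E1 x2 E2) x1) = 0)"
proof -
  define g where "g = matrix_lie_algebra G"
  define d where "d = cdim g"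
  have Glie: "complex_matrix_lie_group G" and red: "reductive_lie_algebra g"
    using G unfolding reductive_complex_matrix_group_def g_def by auto
  have gsub: "csubspace g" and gcomm: "\<And>A B. A \<in> g \<Longrightarrow> B \<in> g \<Longrightarrow> commutator A B \<in> g"
    using red unfolding reductive_lie_algebra_def by auto
  obtain b L where bg: "\<And>l. l < d \<Longrightarrow> b l \<in> g"
    and bexp: "\<And>v. v \<in> g \<Longrightarrow> v = (\<Sum>l<d. cscale (ell L l v) (b l))"
    using basis_coords[OF gsub] unfolding d_def ell_def by blast
  define q where "q = qpoly Q"
  define \<Gamma> where "\<Gamma> l m = Gam P Q L b l m" for l m
  define p where "p = lift q * (X1 - X2)"
  define Gt where "Gt l m = lift (\<Gamma> l m) * (X1 - X2) - (if l = m then 2 * lift q else 0)" for l m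
  define R where "R = Rseq d p Gt"
  define N where "N = d^2"
  have qnz: "q \<noteq> 0" using qpoly_nz[OF D_rat] by (simp add: q_def)
  have pnz: "p \<noteq> 0" unfolding p_def using lift_nz[OF qnz] X1_X2_nz by simp
  obtain \<alpha> where \<alpha>nz: "\<exists>k\<in>{0..N}. \<alpha> k \<noteq> 0"
    and \<alpha>dep: "\<And>l m. l < d \<Longrightarrow> m < d \<Longrightarrow> (\<Sum>k\<in>{0..N}. \<alpha> k * R k l m) = 0"
  proof -
    have "\<exists>c. (\<exists>k\<in>{0..N}. c k \<noteq> 0) \<and> (\<forall>i\<in>{..<d} \<times> {..<d}. (\<Sum>k\<in>{0..N}. c k * (\<lambda>k i. R k (fst i) (snd i)) k i) = 0)"
      by (rule dep_lemma) (auto simp: N_def power2_eq_square)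
    then show ?thesis using that by fastforce
  qed
  define \<beta> where "\<beta> k = \<alpha> k * p ^ k" for k
  have "\<exists>k \<le> N. \<beta> k \<noteq> 0"
    using \<alpha>nz pnz unfolding \<beta>_def by auto
  moreover have "(\<Sum>k = 0..N. poly2 (\<beta> k) x1 x2 * (deriv ^^ k) (\<lambda>y. W2 \<Psi> y E1 x2 E2) x1) = 0"
    if x1: "x1 \<in> U" and x2: "x2 \<in> U" and ne: "x1 \<noteq> x2" for x1 x2
  proof -
    have inv: "\<And>y. y \<in> U \<Longrightarrow> invertible (\<Psi> y)"
      using Glie Psi_G unfolding complex_matrix_lie_group_def by blast
    have hol: "(\<lambda>y. matrix_inv (\<Psi> y) $ i $ j) holomorphic_on U" for i j
    proof -
      have h1: "(\<lambda>y. det (\<chi> a b. if b = i then mat 1 $ a $ j else \<Psi> y $ a $ b)) holomorphic_on U"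
      proof (rule holo_det)
        fix a' b'
        show "(\<lambda>y. (\<chi> a b. if b = i then mat 1 $ a $ j else \<Psi> y $ a $ b) $ a' $ b') holomorphic_on U"
          by (cases "b' = i") (simp_all add: Psi_hol)
      qed
      have h2: "(\<lambda>y. det (\<Psi> y)) holomorphic_on U"
        by (rule holo_det) (simp add: Psi_hol)
      have "(\<lambda>y. det (\<chi> a b. if b = i then mat 1 $ a $ j else \<Psi> y $ a $ b) / det (\<Psi> y)) holomorphic_on U"
        using h1 h2 inv invertible_det_nz by (intro holomorphic_on_divide) auto
      then show ?thesis
        by (rule holomorphic_transform) (simp add: inv_entry inv)
    qed
    define Mx where "Mx y = Mmat \<Psi> y E1" for y
    have Mg: "Mx y \<in> g" if "y \<in> U" for y
      unfolding Mx_def Mmat_def g_def using conj_in_lie[OF Glie] Psi_G that E(1) by blast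
    have Mder: "mderiv Mx (commutator (D y) (Mx y)) y" if y: "y \<in> U" for y
    proof -
      have Pd: "mderiv \<Psi> (D y ** \<Psi> y) y" using Psi_ode y unfolding mderiv_def by blast
      show ?thesis unfolding Mx_def[abs_def] Mmat_def
        by (rule mderiv_conj[OF U(1) y inv Pd hol])
    qed
    have notpole: "y \<notin> poles Q" if "y \<in> U" for y using U(4) that by blast
    have ellcomm: "ell L m (commutator (D y) (Mx y)) = (\<Sum>j<d. ell L j (Mx y) * poly (\<Gamma> m j) y / poly q y)"
      if y: "y \<in> U" for y m
    proof -
      have qy: "poly q y \<noteq> 0" using qpoly_eval_nz[OF notpole[OF y]] by (simp add: q_def)
      have "ell L m (commutator (D y) (Mx y)) = ell L m (commutator (D y) (\<Sum>j<d. cscale (ell L j (Mx y)) (b j)))"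
        using bexp[OF Mg[OF y]] by simp
      also have "\<dots> = (\<Sum>j<d. ell L j (Mx y) * ell L m (commutator (D y) (b j)))"
        by (simp add: comm_lin ell_lin)
      also have "\<dots> = (\<Sum>j<d. ell L j (Mx y) * poly (\<Gamma> m j) y / poly q y)"
        using qy by (simp add: \<Gamma>_def Gam_eval[OF D_rat notpole[OF y]] q_def)
      finally show ?thesis .
    qed
    define U' where "U' = U - {x2}"
    have U'open: "open U'" unfolding U'_def using U(1) by (simp add: open_delete)
    have U'U: "y \<in> U" if "y \<in> U'" for y using that unfolding U'_def by blast
    have U'ne: "y \<noteq> x2" if "y \<in> U'" for y using that unfolding U'_def by blast
    define \<nu> where "\<nu> l = trace (b l ** Mmat \<Psi> x2 E2)" for l
    define u where "u m = (\<lambda>y. ell L m (Mx y) / (y - x2)^2)" for m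
    define P0 where "P0 = (\<lambda>y. poly2 p y x2)"
    have P0eq: "P0 y = poly q y * (y - x2)" for y by (simp add: P0_def p_def)
    have P0nz: "P0 y \<noteq> 0" if "y \<in> U'" for y
      unfolding P0eq using qpoly_eval_nz[OF notpole[OF U'U[OF that]]] U'ne[OF that] by (simp add: q_def)
    have Gteq: "poly2 (Gt m j) y x2 = poly (\<Gamma> m j) y * (y - x2) - (if m = j then 2 * poly q y else 0)" for m j y
      by (cases "m = j") (simp_all add: Gt_def)
    have uder: "(u m has_field_derivative (\<Sum>j<d. poly2 (Gt m j) y x2 * u j y) / P0 y) (at y)"
      if y: "y \<in> U'" and m: "m < d" for y m
    proof -
      have qy: "poly q y \<noteq> 0" using qpoly_eval_nz[OF notpole[OF U'U[OF y]]] by (simp add: q_def)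
      have t: "y - x2 \<noteq> 0" using U'ne[OF y] by simp
      have sq: "((\<lambda>z. (z - x2)^2) has_field_derivative 2 * (y - x2)) (at y)"
        by (auto intro!: derivative_eq_intros)
      have t2: "(y - x2)^2 \<noteq> 0" using t by simp
      have "(u m has_field_derivative
         (ell L m (commutator (D y) (Mx y)) * (y - x2)^2 - ell L m (Mx y) * (2 * (y - x2)))
           / ((y - x2)^2 * (y - x2)^2)) (at y)"
        unfolding u_def by (rule DERIV_divide[OF ell_deriv[OF Mder[OF U'U[OF y]], of L m] sq t2])
      then have "(u m has_field_derivative
         ((\<Sum>j<d. ell L j (Mx y) * poly (\<Gamma> m j) y / poly q y) * (y - x2)^2 - ell L m (Mx y) * (2 * (y - x2)))
           / ((y - x2)^2 * (y - x2)^2)) (at y)"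
        unfolding ellcomm[OF U'U[OF y]] .
      also have "((\<Sum>j<d. ell L j (Mx y) * poly (\<Gamma> m j) y / poly q y) * (y - x2)^2 - ell L m (Mx y) * (2 * (y - x2)))
           / ((y - x2)^2 * (y - x2)^2) = (\<Sum>j<d. poly2 (Gt m j) y x2 * u j y) / P0 y"
        unfolding Gteq P0eq u_def using u_deriv_alg[OF t qy m] by simp
      finally show ?thesis .
    qed
    define S where "S k = (\<lambda>y. \<Sum>l<d. \<Sum>m<d. \<nu> l * (poly2 (R k l m) y x2 * u m y))" for k
    define F where "F k = (\<lambda>y. S k y / P0 y ^ k)" for k
    have Fder: "(F k has_field_derivative F (Suc k) y) (at y)" if y: "y \<in> U'" for k y
    proof -
      define e where "e l m = poly2 (R k l m) y x2" for l m
      define e' where "e' l m = poly2 (pd1 (R k l m)) y x2" for l m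
      define GG where "GG m j = poly2 (Gt m j) y x2" for m j
      define P' where "P' = poly2 (pd1 p) y x2"
      define uu where "uu m = u m y" for m
      have Sd0: "(S k has_field_derivative (\<Sum>l<d. \<Sum>m<d. \<nu> l *
          (poly2 (R k l m) y x2 * ((\<Sum>j<d. poly2 (Gt m j) y x2 * u j y) / P0 y) + poly2 (pd1 (R k l m)) y x2 * u m y))) (at y)"
        unfolding S_def
        by (intro DERIV_sum DERIV_cmult DERIV_mult' poly2_deriv uder[OF y]) simp
      have Sd: "(S k has_field_derivative (\<Sum>l<d. \<Sum>m<d. \<nu> l *
          (e' l m * uu m + e l m * ((\<Sum>j<d. GG m j * uu j) / P0 y)))) (at y)"
        using Sd0 unfolding e_def e'_def GG_def uu_def by (simp add: add.commute)
      have Pd: "(P0 has_field_derivative P') (at y)" unfolding P0_def P'_def by (rule poly2_deriv)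
      have Sky: "S k y = (\<Sum>l<d. \<Sum>m<d. \<nu> l * e l m * uu m)"
        unfolding S_def e_def uu_def by (simp add: mult.assoc)
      have SSk: "S (Suc k) y = (\<Sum>l<d. \<Sum>m<d. \<nu> l * (P0 y * e' l m + (\<Sum>j<d. e l j * GG j m) - of_nat k * P' * e l m) * uu m)"
        unfolding S_def e_def e'_def GG_def uu_def P'_def R_def
        by (simp add: P0_def mult.assoc)
      from quot_pow_deriv[OF Sd Pd P0nz[OF y], of k]
      have "(F k has_field_derivative (P0 y * (\<Sum>l<d. \<Sum>m<d. \<nu> l *
          (e' l m * uu m + e l m * ((\<Sum>j<d. GG m j * uu j) / P0 y))) - of_nat k * P' * S k y) / P0 y ^ Suc k) (at y)"
        unfolding F_def .
      also have "(P0 y * (\<Sum>l<d. \<Sum>m<d. \<nu> l *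
          (e' l m * uu m + e l m * ((\<Sum>j<d. GG m j * uu j) / P0 y))) - of_nat k * P' * S k y) / P0 y ^ Suc k
          = F (Suc k) y"
        unfolding F_def Sky SSk Tident[OF P0nz[OF y]] by simp
      finally show ?thesis .
    qed
    define W where "W = (\<lambda>y. W2 \<Psi> y E1 x2 E2)"
    have W0: "W y = F 0 y" if y: "y \<in> U'" for y
    proof -
      have "trace (Mx y ** Mmat \<Psi> x2 E2) = trace ((\<Sum>l<d. cscale (ell L l (Mx y)) (b l)) ** Mmat \<Psi> x2 E2)"
        using bexp[OF Mg[OF U'U[OF y]]] by simp
      also have "\<dots> = (\<Sum>l<d. ell L l (Mx y) * \<nu> l)" by (simp add: trace_lin \<nu>_def)
      finally have tr: "trace (Mx y ** Mmat \<Psi> x2 E2) = (\<Sum>l<d. ell L l (Mx y) * \<nu> l)" .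
      have "W y = (\<Sum>l<d. \<nu> l * u l y)"
        unfolding W_def W2_def u_def Mx_def[symmetric] tr
        by (simp add: sum_divide_distrib mult.commute)
      also have "\<dots> = (\<Sum>l<d. \<Sum>m<d. \<nu> l * (poly2 (R 0 l m) y x2 * u m y))"
      proof (intro sum.cong refl)
        fix l assume "l \<in> {..<d}"
        have "(\<Sum>m<d. \<nu> l * (poly2 (R 0 l m) y x2 * u m y)) = (\<Sum>m<d. if l = m then \<nu> l * u m y else 0)"
          by (intro sum.cong refl) (simp add: R_def)
        also have "\<dots> = \<nu> l * u l y" using \<open>l \<in> {..<d}\<close> by simp
        finally show "\<nu> l * u l y = (\<Sum>m<d. \<nu> l * (poly2 (R 0 l m) y x2 * u m y))" by simp
      qed
      also have "\<dots> = F 0 y" by (simp add: F_def S_def)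
      finally show ?thesis .
    qed
    have Wk: "\<forall>y\<in>U'. (deriv ^^ k) W y = F k y" for k
    proof (induction k)
      case 0 then show ?case using W0 by simp
    next
      case (Suc k)
      show ?case
      proof
        fix y assume y: "y \<in> U'"
        have "((deriv ^^ k) W has_field_derivative F (Suc k) y) (at y)"
          using has_field_derivative_transform_within_open[OF Fder[OF y] U'open y] Suc.IH by simp
        then show "(deriv ^^ Suc k) W y = F (Suc k) y" by (simp add: DERIV_imp_deriv)
      qed
    qed
    have x1U': "x1 \<in> U'" using x1 ne unfolding U'_def by blast
    have "(\<Sum>k = 0..N. poly2 (\<beta> k) x1 x2 * (deriv ^^ k) W x1) = (\<Sum>k = 0..N. poly2 (\<alpha> k) x1 x2 * S k x1)"
    proof (intro sum.cong refl)
      fix k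
      show "poly2 (\<beta> k) x1 x2 * (deriv ^^ k) W x1 = poly2 (\<alpha> k) x1 x2 * S k x1"
        using Wk[of k] x1U' P0nz[OF x1U'] by (simp add: \<beta>_def F_def P0_def)
    qed
    also have "\<dots> = (\<Sum>k = 0..N. \<Sum>l<d. \<Sum>m<d. \<nu> l * (poly2 (\<alpha> k * R k l m) x1 x2 * u m x1))"
      by (simp add: S_def sum_distrib_left mult_ac)
    also have "\<dots> = (\<Sum>l<d. \<Sum>m<d. \<Sum>k = 0..N. \<nu> l * (poly2 (\<alpha> k * R k l m) x1 x2 * u m x1))"
      by (simp add: sum.swap[of _ "{0..N}"])
    also have "\<dots> = (\<Sum>l<d. \<Sum>m<d. \<nu> l * (poly2 (\<Sum>k = 0..N. \<alpha> k * R k l m) x1 x2 * u m x1))"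
      by (simp add: sum_distrib_left sum_distrib_right)
    also have "\<dots> = 0" by (simp add: \<alpha>dep)
    finally show ?thesis unfolding W_def .
  qed

  ultimately show ?thesis unfolding N_def d_def g_def by blast
qed

end
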